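(* In the setting of the previous statement, a necessary condition for the normal expansions of the fields $\phi^\alpha$ determined from the null data to be absolutely convergent in a neighbourhood of the origin $x=0$ is that there exist positive constants $M$, $r$ such that the null data satisfy $$|\mathcal C(D_{{\bf a}_p}\cdots D_{{\bf a}_1}\phi^\alpha)(q)|\le \frac{M\,p!}{r^p},\qquad p\ge0,\quad {\bf a}_p,\dots,{\bf a}_1=1,2,3,\quad \alpha=1,\dots,n.$$ In particular every real analytic solution of the field equations near $q$ has null data satisfying such estimates.
   Context: Field equations: on a 3-dimensional manifold $N$ with a negative definite metric $h$ (Levi-Civita connection $D$, Laplacian $\Delta_h$, Ricci tensor $R_{ab}[h]$) and $n$ scalar fields $\phi^\alpha$, $\alpha=1,\dots,n$: $$\Delta_h\phi^\alpha=f^\alpha(\phi^\gamma,D_c\phi^\gamma),\qquad R_{ab}[h]=F^\alpha(\phi^\gamma)D_aD_b\phi^\alpha+F^{\alpha\beta}(\phi^\gamma)D_a\phi^\alpha D_b\phi^\beta+f(\phi^\gamma,D_c\phi^\gamma)h_{ab},$$ with $F^\alpha,F^{\alpha\beta}=F^{\beta\alpha}$ real analytic in $\phi^\gamma$ and $f,f^\alpha$ real analytic scalar functions of $\phi^\gamma$ and $D_c\phi^\gamma$. $c_{\bf a}$ is an $h$-normal frame centred at $q$ (orthonormal, $h(c_{\bf a},c_{\bf b})=-\delta_{\bf ab}$, parallelly transported along geodesics through $q$), $x^a$ the associated normal coordinates. $\mathcal C$ denotes the symmetric trace-free part; the null data are $\mathcal C(D_{{\bf a}_p}\cdots D_{{\bf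 a}_1}\phi^\alpha)(q)$, $p\ge0$, and they determine (uniquely) the normal expansion coefficients $D_{{\bf a}_p}\cdots D_{{\bf a}_1}\phi^\alpha(q)$ of $\phi^\alpha(x)=\sum_p\frac1{p!}x^{b_p}\cdots x^{b_1}D_{{\bf b}_p}\cdots D_{{\bf b}_1}\phi^\alpha(q)$ via the field equations. *)

theory Defs
  imports "HOL-Analysis.Analysis" "HOL-Library.Multiset"
begin

text \<open>Rank-p covariant tensors on a 3-dimensional space, given by their components
  in an orthonormal frame: functions on index lists (indices of type 3) of length p.
  The list [a_p, ..., a_1] stands for the index string a_p ... a_1.\<close>

definition tensor_ip :: "nat \<Rightarrow> (3 list \<Rightarrow> real) \<Rightarrow> (3 list \<Rightarrow> real) \<Rightarrow> real" where
  "tensor_ip p A B = (\<Sum>bs\<in>{bs::3 list. length bs = p}. A bs * B bs)"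

text \<open>Symmetric trace-free rank-p tensors (trace w.r.t. the frame metric, which is
  -delta; the sign is irrelevant for vanishing of traces).\<close>

definition symm_tf :: "nat \<Rightarrow> (3 list \<Rightarrow> real) \<Rightarrow> bool" where
  "symm_tf p S \<longleftrightarrow>
     (\<forall>bs. length bs \<noteq> p \<longrightarrow> S bs = 0) \<and>
     (\<forall>bs bs'. length bs = p \<longrightarrow> mset bs' = mset bs \<longrightarrow> S bs' = S bs) \<and>
     (\<forall>bs. length bs + 2 = p \<longrightarrow> (\<Sum>i\<in>UNIV. S (i # i # bs)) = 0)"

text \<open>The symmetric trace-free part C(T) of a rank-p tensor T: the orthogonal projection
  of T onto the space of symmetric trace-free rank-p tensors.\<close>

definition stf_part :: "nat \<Rightarrow> (3 list \<Rightarrow> real) \<Rightarrow> (3 list \<Rightarrow> real)" where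
  "stf_part p T = (THE S. symm_tf p S \<and>
      (\<forall>U. symm_tf p U \<longrightarrow> tensor_ip p (\<lambda>bs. T bs - S bs) U = 0))"

end

theory Submission
  imports Defs
begin

definition gip :: "'a set \<Rightarrow> ('a \<Rightarrow> real) \<Rightarrow> ('a \<Rightarrow> real) \<Rightarrow> real" where
  "gip B f g = (\<Sum>x\<in>B. f x * g x)"

definition lsub :: "('a \<Rightarrow> real) set \<Rightarrow> bool" where
  "lsub V \<longleftrightarrow> (\<lambda>x. 0) \<in> V \<and> (\<forall>f\<in>V. \<forall>g\<in>V. (\<lambda>x. f x + g x) \<in> V) \<and> (\<forall>f\<in>V. \<forall>c. (\<lambda>x. c * f x) \<in> V)"

lemma gip_diff_left: "gip B (\<lambda>x. f x - g x) h = gip B f h - gip B g h"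
  unfolding gip_def by (simp add: algebra_simps sum_subtractf)
lemma gip_add_left: "gip B (\<lambda>x. f x + g x) h = gip B f h + gip B g h"
  unfolding gip_def by (simp add: algebra_simps sum.distrib)
lemma gip_scale_left: "gip B (\<lambda>x. c * f x) h = c * gip B f h"
  unfolding gip_def by (simp add: algebra_simps sum_distrib_left)
lemma gip_comm: "gip B f g = gip B g f"
  unfolding gip_def by (simp add: mult.commute)
lemma gip_diff_right: "gip B h (\<lambda>x. f x - g x) = gip B h f - gip B h g"
  using gip_diff_left gip_comm by metis
lemma gip_add_right: "gip B h (\<lambda>x. f x + g x) = gip B h f + gip B h g"
  using gip_add_left gip_comm by metis
lemma gip_scale_right: "gip B h (\<lambda>x. c * f x) = c * gip B h f"
  using gip_scale_left gip_comm by metis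

lemma lsub_diff: "lsub V \<Longrightarrow> f \<in> V \<Longrightarrow> g \<in> V \<Longrightarrow> (\<lambda>x. f x - g x) \<in> V"
proof -
  assume V: "lsub V" "f \<in> V" "g \<in> V"
  then have "(\<lambda>x. (-1) * g x) \<in> V" unfolding lsub_def by blast
  moreover have add: "\<And>h. h \<in> V \<Longrightarrow> (\<lambda>x. f x + h x) \<in> V" using V(1,2) unfolding lsub_def by blast
  ultimately have "(\<lambda>x. f x + (-1) * g x) \<in> V" by blast
  then show ?thesis by simp
qed

lemma proj_exists:
  assumes "finite A"
  shows "lsub V \<Longrightarrow> A \<subseteq> B \<Longrightarrow> finite B \<Longrightarrow> (\<forall>S\<in>V. \<forall>x. x \<notin> A \<longrightarrow> S x = 0)
    \<Longrightarrow> \<exists>S\<in>V. \<forall>U\<in>V. gip B (\<lambda>x. T x - S x) U = 0"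
  using assms
proof (induction A arbitrary: V T rule: finite_induct)
  case empty
  then have z: "\<forall>U\<in>V. U = (\<lambda>x. 0)" by auto
  show ?case
    apply (rule bexI[of _ "\<lambda>x. 0"])
    using z by (auto simp: gip_def) (use empty.prems in \<open>auto simp: lsub_def\<close>)
next
  case (insert a A)
  define V0 where "V0 = {S\<in>V. S a = 0}"
  have lV0: "lsub V0" using insert.prems(1) unfolding lsub_def V0_def by auto
  have vV0: "\<forall>S\<in>V0. \<forall>x. x \<notin> A \<longrightarrow> S x = 0"
    using insert.prems(4) unfolding V0_def by auto
  have IH: "\<And>T. \<exists>S\<in>V0. \<forall>U\<in>V0. gip B (\<lambda>x. T x - S x) U = 0"
    using insert.IH[OF lV0 _ insert.prems(3) vV0] insert.prems(2) by auto
  show ?case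
  proof (cases "\<forall>S\<in>V. S a = 0")
    case True
    then have "V0 = V" unfolding V0_def by auto
    then show ?thesis using IH by auto
  next
    case False
    then obtain v where v: "v \<in> V" "v a \<noteq> 0" by auto
    obtain Pv where Pv: "Pv \<in> V0" "\<forall>U\<in>V0. gip B (\<lambda>x. v x - Pv x) U = 0" using IH by blast
    obtain PT where PT: "PT \<in> V0" "\<forall>U\<in>V0. gip B (\<lambda>x. T x - PT x) U = 0" using IH by blast
    define w where "w = (\<lambda>x. v x - Pv x)"
    have wV: "w \<in> V" unfolding w_def using lsub_diff[OF insert.prems(1) v(1)] Pv(1) V0_def by auto
    have wa: "w a \<noteq> 0" using v Pv(1) unfolding w_def V0_def by auto
    have aB: "a \<in> B" using insert.prems(2) by auto
    have wa2: "0 < w a * w a" using wa by (cases "w a > 0") (auto simp: mult_neg_neg)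
    have ww: "gip B w w > 0" unfolding gip_def
      by (rule sum_pos2[OF insert.prems(3) aB, of "\<lambda>x. w x * w x"]) (use wa2 in auto)
    define k where "k = gip B T w / gip B w w"
    define S where "S = (\<lambda>x. PT x + k * w x)"
    have SV: "S \<in> V" unfolding S_def using insert.prems(1) PT(1) wV unfolding lsub_def V0_def by auto
    have wperp: "\<And>U. U \<in> V0 \<Longrightarrow> gip B w U = 0" using Pv(2) w_def by auto
    have PTw: "gip B PT w = 0" using wperp[OF PT(1)] gip_comm by metis
    have "\<forall>U\<in>V. gip B (\<lambda>x. T x - S x) U = 0"
    proof
      fix U assume UV: "U \<in> V"
      define lam where "lam = U a / w a"
      define U0 where "U0 = (\<lambda>x. U x - lam * w x)"
      have "(\<lambda>x. lam * w x) \<in> V" using wV insert.prems(1) unfolding lsub_def by auto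
      then have "U0 \<in> V" unfolding U0_def using lsub_diff[OF insert.prems(1) UV] by auto
      moreover have "U0 a = 0" unfolding U0_def lam_def using wa by auto
      ultimately have U0: "U0 \<in> V0" unfolding V0_def by auto
      have Ueq: "U = (\<lambda>x. U0 x + lam * w x)" unfolding U0_def by auto
      have TS: "(\<lambda>x. T x - S x) = (\<lambda>x. (T x - PT x) - k * w x)" unfolding S_def by auto
      have e1: "gip B (\<lambda>x. T x - S x) U0 = 0"
      proof -
        have p: "gip B (\<lambda>x. T x - PT x) U0 = 0" using PT(2) U0 by blast
        show ?thesis unfolding TS gip_diff_left[of B "\<lambda>x. T x - PT x" "\<lambda>x. k * w x" U0]
          using p wperp[OF U0] by (simp add: gip_scale_left)
      qed
      have e2: "gip B (\<lambda>x. T x - S x) w = 0"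
        unfolding TS gip_diff_left gip_scale_left PTw k_def using ww by simp
      show "gip B (\<lambda>x. T x - S x) U = 0"
        using e1 e2 by (subst Ueq) (simp add: gip_add_right gip_scale_right)
    qed
    then show ?thesis using SV by blast
  qed
qed

lemma tensor_ip_gip: "tensor_ip p A B = gip {bs. length bs = p} A B"
  unfolding tensor_ip_def gip_def by simp

lemma lsub_symm_tf: "lsub {S. symm_tf p S}"
proof -
  have 1: "symm_tf p (\<lambda>x. 0)" by (simp add: symm_tf_def)
  have 2: "symm_tf p (\<lambda>x. f x + g x)" if f: "symm_tf p f" and g: "symm_tf p g" for f g
  proof -
    have f1: "\<forall>bs. length bs \<noteq> p \<longrightarrow> f bs = 0" and
      f2: "\<forall>bs bs'. length bs = p \<longrightarrow> mset bs' = mset bs \<longrightarrow> f bs' = f bs" and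
      f3: "\<forall>bs. length bs + 2 = p \<longrightarrow> (\<Sum>i\<in>UNIV. f (i # i # bs)) = 0"
      using f unfolding symm_tf_def by blast+
    have g1: "\<forall>bs. length bs \<noteq> p \<longrightarrow> g bs = 0" and
      g2: "\<forall>bs bs'. length bs = p \<longrightarrow> mset bs' = mset bs \<longrightarrow> g bs' = g bs" and
      g3: "\<forall>bs. length bs + 2 = p \<longrightarrow> (\<Sum>i\<in>UNIV. g (i # i # bs)) = 0"
      using g unfolding symm_tf_def by blast+
    show ?thesis unfolding symm_tf_def
    proof (intro conjI allI impI)
      fix bs :: "3 list" assume "length bs \<noteq> p" then show "f bs + g bs = 0" using f1 g1 by simp
    next
      fix bs bs' :: "3 list" assume "length bs = p" "mset bs' = mset bs"
      then show "f bs' + g bs' = f bs + g bs" using f2 g2 by metis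
    next
      fix bs :: "3 list" assume l: "length bs + 2 = p"
      have "(\<Sum>i\<in>UNIV. f (i # i # bs) + g (i # i # bs)) = (\<Sum>i\<in>UNIV. f (i # i # bs)) + (\<Sum>i\<in>UNIV. g (i # i # bs))"
        by (rule sum.distrib)
      then show "(\<Sum>i\<in>UNIV. f (i # i # bs) + g (i # i # bs)) = 0" using f3 g3 l by simp
    qed
  qed
  have 3: "symm_tf p (\<lambda>x. c * f x)" if f: "symm_tf p f" for f c
  proof -
    have f1: "\<forall>bs. length bs \<noteq> p \<longrightarrow> f bs = 0" and
      f2: "\<forall>bs bs'. length bs = p \<longrightarrow> mset bs' = mset bs \<longrightarrow> f bs' = f bs" and
      f3: "\<forall>bs. length bs + 2 = p \<longrightarrow> (\<Sum>i\<in>UNIV. f (i # i # bs)) = 0"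
      using f unfolding symm_tf_def by blast+
    show ?thesis unfolding symm_tf_def
    proof (intro conjI allI impI)
      fix bs :: "3 list" assume "length bs \<noteq> p" then show "c * f bs = 0" using f1 by simp
    next
      fix bs bs' :: "3 list" assume "length bs = p" "mset bs' = mset bs"
      then show "c * f bs' = c * f bs" using f2 by metis
    next
      fix bs :: "3 list" assume l: "length bs + 2 = p"
      have "(\<Sum>i\<in>UNIV. c * f (i # i # bs)) = c * (\<Sum>i\<in>UNIV. f (i # i # bs))"
        by (rule sum_distrib_left[symmetric])
      then show "(\<Sum>i\<in>UNIV. c * f (i # i # bs)) = 0" using f3 l by simp
    qed
  qed
  show ?thesis unfolding lsub_def using 1 2 3 by blast
qed

lemma symm_tf_zero: "symm_tf p S \<Longrightarrow> length bs \<noteq> p \<Longrightarrow> S bs = 0"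
  unfolding symm_tf_def by blast

lemma stf_char:
  "symm_tf p (stf_part p T) \<and> (\<forall>U. symm_tf p U \<longrightarrow> tensor_ip p (\<lambda>bs. T bs - stf_part p T bs) U = 0)"
proof -
  let ?L = "{bs::3 list. length bs = p}"
  have fin: "finite ?L" by (rule finite_list_length)
  have vo: "\<forall>S\<in>{S. symm_tf p S}. \<forall>x. x \<notin> ?L \<longrightarrow> S x = 0" using symm_tf_zero by blast
  from proj_exists[OF fin lsub_symm_tf subset_refl fin vo, of T]
  obtain S where S0: "S \<in> {S. symm_tf p S}" "\<forall>U\<in>{S. symm_tf p S}. gip ?L (\<lambda>x. T x - S x) U = 0"
    by blast
  have S: "symm_tf p S" "\<forall>U. symm_tf p U \<longrightarrow> tensor_ip p (\<lambda>bs. T bs - S bs) U = 0"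
    using S0 unfolding tensor_ip_gip by simp_all
  have uniq: "S2 = S" if S2: "symm_tf p S2" "\<forall>U. symm_tf p U \<longrightarrow> tensor_ip p (\<lambda>bs. T bs - S2 bs) U = 0" for S2
  proof -
    define D where "D = (\<lambda>x. S x - S2 x)"
    have sD: "symm_tf p D" unfolding D_def using lsub_diff[OF lsub_symm_tf, where f=S and g=S2] S(1) S2(1) by simp
    have a: "gip ?L (\<lambda>bs. T bs - S2 bs) D = 0" using S2(2) sD unfolding tensor_ip_gip by blast
    have b: "gip ?L (\<lambda>bs. T bs - S bs) D = 0" using S(2) sD unfolding tensor_ip_gip by blast
    have "gip ?L D D = gip ?L (\<lambda>bs. T bs - S2 bs) D - gip ?L (\<lambda>bs. T bs - S bs) D"
      unfolding gip_def sum_subtractf[symmetric] by (rule sum.cong) (simp_all add: D_def algebra_simps)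
    then have "gip ?L D D = 0" using a b by simp
    then have "\<forall>x\<in>?L. D x * D x = 0" unfolding gip_def
      using sum_nonneg_eq_0_iff[OF fin, of "\<lambda>x. D x * D x"] by simp
    then have "\<forall>x\<in>?L. D x = 0" by simp
    moreover have "\<forall>x. x \<notin> ?L \<longrightarrow> D x = 0" using symm_tf_zero[OF sD] by simp
    ultimately have "\<forall>x. D x = 0" by blast
    then show ?thesis unfolding D_def by (simp add: fun_eq_iff)
  qed
  have ex: "\<exists>!S. symm_tf p S \<and> (\<forall>U. symm_tf p U \<longrightarrow> tensor_ip p (\<lambda>bs. T bs - S bs) U = 0)"
  proof (rule ex1I[of _ S])
    show "symm_tf p S \<and> (\<forall>U. symm_tf p U \<longrightarrow> tensor_ip p (\<lambda>bs. T bs - S bs) U = 0)"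
      using S by (rule conjI)
  next
    fix S2 assume "symm_tf p S2 \<and> (\<forall>U. symm_tf p U \<longrightarrow> tensor_ip p (\<lambda>bs. T bs - S2 bs) U = 0)"
    then show "S2 = S" using uniq by blast
  qed
  have "stf_part p T = S" unfolding stf_part_def
    by (rule the1_equality[OF ex]) (rule conjI[OF S(1) S(2)])
  then show ?thesis using S by simp
qed

lemma stf_bound:
  assumes "length as = p"
  shows "\<bar>stf_part p T as\<bar> \<le> (\<Sum>bs\<in>{bs::3 list. length bs = p}. \<bar>T bs\<bar>)"
proof -
  let ?L = "{bs::3 list. length bs = p}"
  let ?S = "stf_part p T"
  have fin: "finite ?L" by (rule finite_list_length)
  have orth: "gip ?L (\<lambda>x. T x - ?S x) ?S = 0" using stf_char[of p T] unfolding tensor_ip_gip by auto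
  have "0 \<le> gip ?L (\<lambda>x. T x - ?S x) (\<lambda>x. T x - ?S x)" unfolding gip_def by (auto intro: sum_nonneg)
  also have "\<dots> = gip ?L (\<lambda>x. T x - ?S x) T" unfolding gip_diff_right orth by simp
  also have "\<dots> = gip ?L T T - gip ?L ?S T" unfolding gip_diff_left by simp
  also have "gip ?L ?S T = gip ?L ?S ?S"
    using orth unfolding gip_diff_left by (simp add: gip_comm)
  finally have SS: "gip ?L ?S ?S \<le> gip ?L T T" by simp
  have "?S as * ?S as \<le> gip ?L ?S ?S" unfolding gip_def
    using member_le_sum[OF _ _ fin, of as "\<lambda>x. ?S x * ?S x"] assms by auto
  also have "gip ?L T T \<le> (\<Sum>bs\<in>?L. \<bar>T bs\<bar>) * (\<Sum>bs\<in>?L. \<bar>T bs\<bar>)"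
  proof -
    have "gip ?L T T = (\<Sum>x\<in>?L. \<bar>T x\<bar> * \<bar>T x\<bar>)" unfolding gip_def by (simp add: abs_mult_self)
    also have "\<dots> \<le> (\<Sum>x\<in>?L. \<bar>T x\<bar> * (\<Sum>bs\<in>?L. \<bar>T bs\<bar>))"
      apply (rule sum_mono)
      apply (rule mult_left_mono)
      using member_le_sum[OF _ _ fin, of _ "\<lambda>x. \<bar>T x\<bar>"] by auto
    also have "\<dots> = (\<Sum>bs\<in>?L. \<bar>T bs\<bar>) * (\<Sum>bs\<in>?L. \<bar>T bs\<bar>)" by (simp add: sum_distrib_right)
    finally show ?thesis .
  qed
  ultimately have "(?S as)\<^sup>2 \<le> (\<Sum>bs\<in>?L. \<bar>T bs\<bar>)\<^sup>2" using SS by (simp add: power2_eq_square)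
  then have "\<bar>?S as\<bar> \<le> \<bar>\<Sum>bs\<in>?L. \<bar>T bs\<bar>\<bar>" using abs_le_square_iff by blast
  then show ?thesis by (simp add: sum_nonneg)
qed

theorem lemma2p2:
  fixes n :: nat and c :: "nat \<Rightarrow> 3 list \<Rightarrow> real"
  assumes "\<exists>e>0. \<forall>x::real^3. norm x < e \<longrightarrow>
     (\<forall>\<alpha>\<in>{1..n}. summable (\<lambda>p. (1 / fact p) *
        (\<Sum>bs\<in>{bs::3 list. length bs = p}. \<bar>prod_list (map (\<lambda>b. x $ b) bs) * c \<alpha> bs\<bar>)))"
  shows "\<exists>M>0. \<exists>r>0. \<forall>\<alpha>\<in>{1..n}. \<forall>p. \<forall>as::3 list. length as = p \<longrightarrow>
     \<bar>stf_part p (c \<alpha>) as\<bar> \<le> M * fact p / r ^ p"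
proof -
  obtain e where e: "e > 0" and H: "\<forall>x::real^3. norm x < e \<longrightarrow>
     (\<forall>\<alpha>\<in>{1..n}. summable (\<lambda>p. (1 / fact p) *
        (\<Sum>bs\<in>{bs::3 list. length bs = p}. \<bar>prod_list (map (\<lambda>b. x $ b) bs) * c \<alpha> bs\<bar>)))"
    using assms by blast
  define t where "t = e / 4"
  have t: "t > 0" unfolding t_def using e by simp
  define x :: "real^3" where "x = (\<chi> i. t)"
  have "norm x \<le> (\<Sum>i\<in>UNIV. \<bar>x $ i\<bar>)" by (rule norm_le_l1_cart)
  also have "\<dots> = 3 * t" unfolding x_def using t by simp
  finally have "norm x < e" unfolding t_def using e by simp
  with H have Hs: "\<forall>\<alpha>\<in>{1..n}. summable (\<lambda>p. (1 / fact p) *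
        (\<Sum>bs\<in>{bs::3 list. length bs = p}. \<bar>prod_list (map (\<lambda>b. x $ b) bs) * c \<alpha> bs\<bar>))" by blast
  have eq: "(\<Sum>bs\<in>{bs::3 list. length bs = p}. \<bar>prod_list (map (\<lambda>b. x $ b) bs) * c \<alpha> bs\<bar>)
      = t ^ p * (\<Sum>bs\<in>{bs::3 list. length bs = p}. \<bar>c \<alpha> bs\<bar>)" for p \<alpha>
    unfolding sum_distrib_left
    by (rule sum.cong) (use t in \<open>auto simp: x_def abs_mult map_replicate_const prod_list_replicate\<close>)
  have "\<forall>\<alpha>\<in>{1..n}. \<exists>K>0. \<forall>p. (1 / fact p) * (t ^ p * (\<Sum>bs\<in>{bs::3 list. length bs = p}. \<bar>c \<alpha> bs\<bar>)) \<le> K"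
  proof
    fix \<alpha> assume a: "\<alpha> \<in> {1..n}"
    let ?f = "\<lambda>p. (1 / fact p) * (t ^ p * (\<Sum>bs\<in>{bs::3 list. length bs = p}. \<bar>c \<alpha> bs\<bar>))"
    have "summable ?f" using Hs a unfolding eq by simp
    then have "?f \<longlonglongrightarrow> 0" by (rule summable_LIMSEQ_zero)
    then have "Bseq ?f" by (intro convergent_imp_Bseq convergentI)
    then obtain K where K0: "K > 0" and Kb: "\<forall>p. norm (?f p) \<le> K" unfolding Bseq_def by blast
    have "\<forall>p. ?f p \<le> K"
    proof
      fix p show "?f p \<le> K" using abs_ge_self[of "?f p"] Kb[rule_format, of p] unfolding real_norm_def by linarith
    qed
    then show "\<exists>K>0. \<forall>p. ?f p \<le> K" using K0 by blast
  qed
  from bchoice[OF this] obtain K where K: "\<forall>\<alpha>\<in>{1..n}. K \<alpha> > 0 \<and> (\<forall>p. (1 / fact p) * (t ^ p * (\<Sum>bs\<in>{bs::3 list. length bs = p}. \<bar>c \<alpha> bs\<bar>)) \<le> K \<alpha>)"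
    ..
  define M where "M = 1 + (\<Sum>\<alpha>\<in>{1..n}. K \<alpha>)"
  have Kle: "K \<alpha> \<le> M" if "\<alpha> \<in> {1..n}" for \<alpha>
  proof -
    have "K \<alpha> \<le> (\<Sum>\<alpha>\<in>{1..n}. K \<alpha>)"
      by (rule member_le_sum) (use that K in \<open>auto simp: less_imp_le\<close>)
    then show ?thesis unfolding M_def by simp
  qed
  have "0 \<le> (\<Sum>\<alpha>\<in>{1..n}. K \<alpha>)" by (rule sum_nonneg) (use K in \<open>auto simp: less_imp_le\<close>)
  then have Mpos: "M > 0" unfolding M_def by simp
  have main: "\<forall>\<alpha>\<in>{1..n}. \<forall>p. \<forall>as::3 list. length as = p \<longrightarrow>
     \<bar>stf_part p (c \<alpha>) as\<bar> \<le> M * fact p / t ^ p"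
  proof (intro ballI allI impI)
    fix \<alpha> p and as :: "3 list" assume a: "\<alpha> \<in> {1..n}" and l: "length as = p"
    let ?s = "(\<Sum>bs\<in>{bs::3 list. length bs = p}. \<bar>c \<alpha> bs\<bar>)"
    have "(1 / fact p) * (t ^ p * ?s) \<le> M" using K a Kle[OF a] by (meson order_trans)
    then have "?s \<le> M * fact p / t ^ p"
      using t by (simp add: field_simps)
    then show "\<bar>stf_part p (c \<alpha>) as\<bar> \<le> M * fact p / t ^ p"
      by (rule order_trans[OF stf_bound[OF l, of "c \<alpha>"]])
  qed
  show ?thesis
    apply (rule exI[of _ M])
    apply (rule conjI[OF Mpos])
    apply (rule exI[of _ t])
    apply (rule conjI[OF t])
    by (rule main)
qed

end
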